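(* Let $n=2$, and let $L\in K[D_1,D_2]$ have order $d$ and symbol $\operatorname{Sym}_L=S_1\cdots S_k$, where $S_1,\dots,S_k\in K[X_1,X_2]$ are pairwise coprime homogeneous polynomials. Then the ring of obstacles $K[X_1,X_2]/I$, where $I=(\operatorname{Sym}_L/S_1,\dots,\operatorname{Sym}_L/S_k)$, is zero in degree $d-1$: every homogeneous polynomial of degree $d-1$ lies in $I$. Consequently every common obstacle to factorization of $L$ of type $(S_1)\cdots(S_k)$ has order at most $d-2$.
   Context: $K$ is a field with commuting derivations $\partial_1,\partial_2$, and $K[D_1,D_2]$ is the ring of linear differential operators over $K$: $D_1D_2=D_2D_1$ and $D_i\circ a=aD_i+\partial_i(a)$ for $a\in K$. Every $L$ is uniquely $\sum a_{ij}D_1^iD_2^j$ with $a_{ij}\in K$. The order $\operatorname{ord}(L)$ is the largest $i+j$ with $a_{ij}\neq0$, and $\operatorname{ord}(0)=-\infty$. The symbol $\operatorname{Sym}_L=\sum_{i+j=\operatorname{ord}L}a_{ij}X_1^iX_2^j$. A factorization of type $(S_1)\cdots(S_k)$ of an operator $M$ is $M=F_1\circ\cdots\circ F_k$ with $\operatorname{Sym}_{F_i}=S_i$. A common obstacle to factorization of $L$ of that type is an operator $R$ such that $L-R$ has such a factorization and $R$ has minimal possible order among such operators. *)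

theory Defs
  imports "HOL-Computational_Algebra.Polynomial" "HOL-Library.Extended_Real"
begin

text \<open>The base field K is a type 'a :: field with two maps d1 d2 that are
 commuting derivations.\<close>

definition is_derivation :: "('a::field \<Rightarrow> 'a) \<Rightarrow> bool" where
  "is_derivation d \<longleftrightarrow> (\<forall>a b. d (a + b) = d a + d b \<and> d (a * b) = a * d b + d a * b)"

text \<open>A differential operator sum a_ij D1^i D2^j is represented by its
 coefficient function (i,j) to a_ij, required to have finite support.\<close>

type_synonym 'a diffop = "nat \<times> nat \<Rightarrow> 'a"

definition op_supp :: "'a::zero diffop \<Rightarrow> (nat \<times> nat) set" where
  "op_supp L = {ij. L ij \<noteq> 0}"

definition op_valid :: "'a::zero diffop \<Rightarrow> bool" where
  "op_valid L \<longleftrightarrow> finite (op_supp L)"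

definition op_one :: "'a::{zero,one} diffop" where
  "op_one = (\<lambda>ij. if ij = (0, 0) then 1 else 0)"

text \<open>Composition in K[D1,D2]: from D_i a = a D_i + d_i(a) and D1 D2 = D2 D1 one gets
 (a D1^i D2^j) (b D1^k D2^l) = sum_{p<=i, q<=j} C(i,p) C(j,q) a d1^p d2^q(b) D1^(i-p+k) D2^(j-q+l).\<close>

definition op_comp :: "('a::field \<Rightarrow> 'a) \<Rightarrow> ('a \<Rightarrow> 'a) \<Rightarrow> 'a diffop \<Rightarrow> 'a diffop \<Rightarrow> 'a diffop" where
  "op_comp d1 d2 L M = (\<lambda>(m, n).
     \<Sum>(i, j)\<in>op_supp L. \<Sum>p\<le>i. \<Sum>q\<le>j.
       (if i - p \<le> m \<and> j - q \<le> n then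
          of_nat (i choose p) * of_nat (j choose q) * L (i, j)
            * (d1 ^^ p) ((d2 ^^ q) (M (m - (i - p), n - (j - q))))
        else 0))"

definition op_comp_list :: "('a::field \<Rightarrow> 'a) \<Rightarrow> ('a \<Rightarrow> 'a) \<Rightarrow> 'a diffop list \<Rightarrow> 'a diffop" where
  "op_comp_list d1 d2 Fs = foldr (op_comp d1 d2) Fs op_one"

definition op_ord :: "'a::zero diffop \<Rightarrow> ereal" where
  "op_ord L = (if op_supp L = {} then -\<infinity>
               else ereal (real (Max ((\<lambda>(i, j). i + j) ` op_supp L))))"

text \<open>Polynomials in K[X1,X2] are represented as 'a poly poly: the coefficient of
 X1^i X2^j in P is coeff (coeff P j) i.\<close>

definition biv_coeff :: "'a::zero poly poly \<Rightarrow> nat \<Rightarrow> nat \<Rightarrow> 'a" where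
  "biv_coeff P i j = coeff (coeff P j) i"

definition biv_monom :: "'a::zero \<Rightarrow> nat \<Rightarrow> nat \<Rightarrow> 'a poly poly" where
  "biv_monom a i j = monom (monom a i) j"

definition homogeneous :: "'a::zero poly poly \<Rightarrow> nat \<Rightarrow> bool" where
  "homogeneous P m \<longleftrightarrow> (\<forall>i j. biv_coeff P i j \<noteq> 0 \<longrightarrow> i + j = m)"

definition op_sym :: "'a::comm_ring_1 diffop \<Rightarrow> 'a poly poly" where
  "op_sym L = (if op_supp L = {} then 0
     else (let D = Max ((\<lambda>(i, j). i + j) ` op_supp L) in
       \<Sum>(i, j)\<in>{(i, j). (i, j) \<in> op_supp L \<and> i + j = D}. biv_monom (L (i, j)) i j))"

definition has_factorization ::
  "('a::field \<Rightarrow> 'a) \<Rightarrow> ('a \<Rightarrow> 'a) \<Rightarrow> 'a diffop \<Rightarrow> 'a poly poly list \<Rightarrow> bool" where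
  "has_factorization d1 d2 M Ss \<longleftrightarrow>
     (\<exists>Fs. length Fs = length Ss \<and> (\<forall>F\<in>set Fs. op_valid F)
        \<and> (\<forall>i<length Ss. op_sym (Fs ! i) = Ss ! i)
        \<and> op_comp_list d1 d2 Fs = M)"

definition common_obstacle ::
  "('a::field \<Rightarrow> 'a) \<Rightarrow> ('a \<Rightarrow> 'a) \<Rightarrow> 'a diffop \<Rightarrow> 'a poly poly list \<Rightarrow> 'a diffop \<Rightarrow> bool" where
  "common_obstacle d1 d2 L Ss R \<longleftrightarrow>
     op_valid R \<and> has_factorization d1 d2 (L - R) Ss \<and>
     (\<forall>R'. op_valid R' \<and> has_factorization d1 d2 (L - R') Ss \<longrightarrow> op_ord R \<le> op_ord R')"

definition gen_ideal :: "'a::comm_ring_1 list \<Rightarrow> 'a set" where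
  "gen_ideal gs = {x. \<exists>c. x = (\<Sum>i<length gs. c i * gs ! i)}"

end

theory Submission
  imports Defs
begin


definition opT :: "'a::zero poly poly \<Rightarrow> 'a diffop" where
  "opT P = (\<lambda>(i,j). biv_coeff P i j)"
definition low :: "'a::zero diffop \<Rightarrow> nat \<Rightarrow> bool" where
  "low A t \<longleftrightarrow> (\<forall>i j. t \<le> i + j \<longrightarrow> A (i,j) = 0)"
definition conv :: "'a::comm_semiring_1 diffop \<Rightarrow> 'a diffop \<Rightarrow> nat \<times> nat \<Rightarrow> 'a" where
  "conv A B = (\<lambda>(m,n). \<Sum>r\<le>m. \<Sum>l\<le>n. A (r,l) * B (m-r, n-l))"
definition polyOf :: "'a::comm_monoid_add diffop \<Rightarrow> nat \<Rightarrow> 'a poly poly" where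
  "polyOf f t = (\<Sum>i\<le>t. biv_monom (f (i, t-i)) i (t-i))"

lemma opT_apply[simp]: "opT P (i,j) = biv_coeff P i j"
  by (simp add: opT_def)

lemma biv_eqI: "(\<And>i j. biv_coeff P i j = biv_coeff Q i j) \<Longrightarrow> P = Q"
  unfolding biv_coeff_def by (intro poly_eqI) auto

lemma biv_coeff_add[simp]: "biv_coeff (P + Q) i j = biv_coeff P i j + biv_coeff Q i j"
  by (simp add: biv_coeff_def)
lemma biv_coeff_diff[simp]: "biv_coeff (P - Q) i j = biv_coeff P i j - biv_coeff (Q::'a::comm_ring poly poly) i j"
  by (simp add: biv_coeff_def)
lemma biv_coeff_0[simp]: "biv_coeff 0 i j = 0"
  by (simp add: biv_coeff_def)
lemma biv_coeff_1: "biv_coeff (1::'a::comm_semiring_1 poly poly) i j = (if i = 0 \<and> j = 0 then 1 else 0)"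
  by (simp add: biv_coeff_def coeff_1)
lemma biv_coeff_sum: "biv_coeff (\<Sum>x\<in>A. f x) i j = (\<Sum>x\<in>A. biv_coeff (f x) i j)"
  by (simp add: biv_coeff_def coeff_sum)
lemma biv_coeff_monom: "biv_coeff (biv_monom a i j) i' j' = (if i = i' \<and> j = j' then a else 0)"
  by (simp add: biv_coeff_def biv_monom_def)

lemma biv_coeff_mult: "biv_coeff (P * Q) m n = conv (opT P) (opT Q) (m,n)"
proof -
  have "biv_coeff (P*Q) m n = (\<Sum>l\<le>n. coeff (coeff P l * coeff Q (n-l)) m)"
    by (simp add: biv_coeff_def coeff_mult coeff_sum)
  also have "\<dots> = (\<Sum>l\<le>n. \<Sum>r\<le>m. biv_coeff P r l * biv_coeff Q (m-r) (n-l))"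
    by (simp add: coeff_mult biv_coeff_def)
  also have "\<dots> = conv (opT P) (opT Q) (m,n)"
    by (simp add: conv_def sum.swap[of _ "{..n}"])
  finally show ?thesis .
qed

lemma biv_coeff_polyOf: "biv_coeff (polyOf f t) i j = (if i + j = t then f (i,j) else 0)"
proof -
  have "biv_coeff (polyOf f t) i j = (\<Sum>k\<le>t. if k = i then (if t - i = j then f (i, j) else 0) else 0)"
    unfolding polyOf_def biv_coeff_sum biv_coeff_monom
    by (intro sum.cong) auto
  also have "\<dots> = (if i + j = t then f (i,j) else 0)"
    by (subst sum.delta) auto
  finally show ?thesis .
qed

lemma homogeneous_polyOf: "homogeneous (polyOf f t) t"
  by (simp add: homogeneous_def biv_coeff_polyOf)

lemma homogeneous_alt: "homogeneous P m \<longleftrightarrow> (\<forall>i j. i + j \<noteq> m \<longrightarrow> biv_coeff P i j = 0)"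
  unfolding homogeneous_def by blast

lemma homogeneous_0[simp]: "homogeneous 0 m" by (simp add: homogeneous_def)
lemma homogeneous_1: "homogeneous (1::'a::comm_semiring_1 poly poly) 0"
  by (simp add: homogeneous_def biv_coeff_1)
lemma homogeneous_add: "homogeneous P m \<Longrightarrow> homogeneous Q m \<Longrightarrow> homogeneous (P + Q) m"
  by (auto simp: homogeneous_alt)
lemma homogeneous_diff: "homogeneous P m \<Longrightarrow> homogeneous Q m \<Longrightarrow> homogeneous (P - Q) (m::nat)"
  for P Q :: "'a::comm_ring poly poly"
  by (auto simp: homogeneous_alt)
lemma homogeneous_sum: "(\<And>x. x \<in> A \<Longrightarrow> homogeneous (f x) m) \<Longrightarrow> homogeneous (\<Sum>x\<in>A. f x) m"
  by (induct A rule: infinite_finite_induct) (auto intro: homogeneous_add)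

lemma homogeneous_mult:
  fixes P Q :: "'a::comm_semiring_1 poly poly"
  assumes "homogeneous P a" "homogeneous Q b" shows "homogeneous (P * Q) (a + b)"
  unfolding homogeneous_def
proof (intro allI impI)
  fix i j assume "biv_coeff (P*Q) i j \<noteq> 0"
  then obtain r l where "r \<le> i" "l \<le> j" "biv_coeff P r l * biv_coeff Q (i-r) (j-l) \<noteq> 0"
    unfolding biv_coeff_mult conv_def by (auto elim!: sum.not_neutral_contains_not_neutral)
  then have "biv_coeff P r l \<noteq> 0" "biv_coeff Q (i-r) (j-l) \<noteq> 0" by auto
  then have "r + l = a" "(i-r) + (j-l) = b" using assms by (auto simp: homogeneous_def)
  with \<open>r \<le> i\<close> \<open>l \<le> j\<close> show "i + j = a + b" by arith
qed

lemma homogeneous_prod_list: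
  "(\<And>i. i < length Ss \<Longrightarrow> homogeneous (Ss!i) (ns!i)) \<Longrightarrow> length ns = length Ss
   \<Longrightarrow> homogeneous (prod_list (Ss::'a::comm_semiring_1 poly poly list)) (sum_list ns)"
proof (induct Ss arbitrary: ns)
  case Nil then show ?case by (simp add: homogeneous_1)
next
  case (Cons S Ss)
  then obtain n ns' where ns: "ns = n # ns'" by (cases ns) auto
  have "homogeneous S n" using Cons(2)[of 0] ns by simp
  moreover have "homogeneous (prod_list Ss) (sum_list ns')"
    using Cons ns by (intro Cons(1)) force+
  ultimately show ?case using ns by (simp add: homogeneous_mult)
qed

lemma low_opT: "homogeneous P m \<Longrightarrow> low (opT P) (Suc m)"
  by (auto simp: low_def homogeneous_alt)

lemma der_zero: "is_derivation d \<Longrightarrow> d 0 = 0"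
  unfolding is_derivation_def by (metis add.right_neutral add_left_cancel)
lemma funpow_zero: fixes d :: "'a::zero \<Rightarrow> 'a" shows "d 0 = 0 \<Longrightarrow> (d ^^ p) 0 = 0"
  by (induct p) auto
lemma funpow_der_add: fixes d :: "'a::field \<Rightarrow> 'a" shows "is_derivation d \<Longrightarrow> (d ^^ p) (x + y) = (d ^^ p) x + (d ^^ p) y"
  by (induct p) (auto simp: is_derivation_def)

definition cterm :: "('a::field \<Rightarrow> 'a) \<Rightarrow> ('a \<Rightarrow> 'a) \<Rightarrow> 'a diffop \<Rightarrow> 'a diffop \<Rightarrow> nat \<Rightarrow> nat \<Rightarrow> nat \<Rightarrow> nat \<Rightarrow> nat \<Rightarrow> nat \<Rightarrow> 'a" where
  "cterm d1 d2 A B m n i j p q = (if i - p \<le> m \<and> j - q \<le> n then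
          of_nat (i choose p) * of_nat (j choose q) * A (i, j)
            * (d1 ^^ p) ((d2 ^^ q) (B (m - (i - p), n - (j - q))))
        else 0)"

lemma op_comp_alt:
  assumes "finite S" "op_supp A \<subseteq> S"
  shows "op_comp d1 d2 A B (m,n) = (\<Sum>(i,j)\<in>S. \<Sum>p\<le>i. \<Sum>q\<le>j. cterm d1 d2 A B m n i j p q)"
  unfolding op_comp_def cterm_def prod.case
  by (intro sum.mono_neutral_left[OF assms(1,2)]) (auto simp: op_supp_def cong: if_cong)

lemma low_finite: "low A t \<Longrightarrow> finite (op_supp A)"
proof -
  assume "low A t"
  have "op_supp A \<subseteq> {..t} \<times> {..t}"
  proof
    fix x assume "x \<in> op_supp A"
    then obtain i j where x: "x = (i,j)" "A (i,j) \<noteq> 0" by (cases x) (auto simp: op_supp_def)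
    then have "i + j < t" using \<open>low A t\<close> unfolding low_def by (meson not_le)
    then show "x \<in> {..t} \<times> {..t}" using x by auto
  qed
  then show ?thesis by (rule finite_subset) auto
qed



lemma op_comp_cterm: "op_comp d1 d2 A B (m,n) = (\<Sum>(i,j)\<in>op_supp A. \<Sum>p\<le>i. \<Sum>q\<le>j. cterm d1 d2 A B m n i j p q)"
  by (simp add: op_comp_def cterm_def)

lemma cterm_add1: "cterm d1 d2 (\<lambda>x. A x + G x) B m n i j p q = cterm d1 d2 A B m n i j p q + cterm d1 d2 G B m n i j p q"
  by (simp add: cterm_def algebra_simps)
lemma cterm_add2: "is_derivation d1 \<Longrightarrow> is_derivation d2 \<Longrightarrow>
  cterm d1 d2 A (\<lambda>x. B x + C x) m n i j p q = cterm d1 d2 A B m n i j p q + cterm d1 d2 A C m n i j p q"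
  by (simp add: cterm_def funpow_der_add algebra_simps)

lemma op_comp_add1:
  assumes "finite (op_supp A)" "finite (op_supp G)"
  shows "op_comp d1 d2 (\<lambda>x. A x + G x) B (m,n) = op_comp d1 d2 A B (m,n) + op_comp d1 d2 G B (m,n)"
proof -
  let ?S = "op_supp A \<union> op_supp G"
  have s: "op_supp (\<lambda>x. A x + G x) \<subseteq> ?S" by (auto simp: op_supp_def)
  have "op_comp d1 d2 (\<lambda>x. A x + G x) B (m,n) = (\<Sum>(i,j)\<in>?S. \<Sum>p\<le>i. \<Sum>q\<le>j. cterm d1 d2 (\<lambda>x. A x + G x) B m n i j p q)"
    by (rule op_comp_alt) (use assms s in auto)
  also have "\<dots> = (\<Sum>(i,j)\<in>?S. \<Sum>p\<le>i. \<Sum>q\<le>j. cterm d1 d2 A B m n i j p q) + (\<Sum>(i,j)\<in>?S. \<Sum>p\<le>i. \<Sum>q\<le>j. cterm d1 d2 G B m n i j p q)"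
    by (simp add: cterm_add1 sum.distrib split_def)
  also have "\<dots> = op_comp d1 d2 A B (m,n) + op_comp d1 d2 G B (m,n)"
    using assms by (simp add: op_comp_alt[symmetric])
  finally show ?thesis .
qed

lemma op_comp_add2:
  assumes "is_derivation d1" "is_derivation d2"
  shows "op_comp d1 d2 A (\<lambda>x. B x + C x) (m,n) = op_comp d1 d2 A B (m,n) + op_comp d1 d2 A C (m,n)"
  by (simp add: op_comp_cterm cterm_add2[OF assms] sum.distrib split_def)

lemma cterm_zero:
  assumes "d1 0 = 0" "d2 0 = 0" "low A a" "low B b" "a + b \<le> m + n + p + q + 1" "p \<le> i" "q \<le> j"
  shows "cterm d1 d2 A B m n i j p q = 0"
proof (cases "A (i,j) = 0")
  case False
  then have ij: "i + j < a" using assms(3) unfolding low_def by (meson not_le)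
  show ?thesis
  proof (cases "i - p \<le> m \<and> j - q \<le> n")
    case True
    have x: "m - (i - p) + i = m + p" using True assms(6) by linarith
    have y: "n - (j - q) + j = n + q" using True assms(7) by linarith
    have "b \<le> (m - (i - p)) + (n - (j - q))" using x y ij assms(5) by linarith
    then have "B (m - (i - p), n - (j - q)) = 0" using assms(4) by (auto simp: low_def)
    then show ?thesis by (simp add: cterm_def funpow_zero assms(1,2))
  qed (auto simp: cterm_def)
qed (simp add: cterm_def)

lemma comp_low:
  assumes "is_derivation d1" "is_derivation d2" "low A a" "low B b" "a + b \<le> t + 1"
  shows "low (op_comp d1 d2 A B) t"
  unfolding low_def
proof (intro allI impI)
  fix m n assume mn: "t \<le> m + n"
  have z: "d1 0 = 0" "d2 0 = 0" using assms der_zero by auto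
  have "cterm d1 d2 A B m n i j p q = 0" if "p \<le> i" "q \<le> j" for i j p q
    using cterm_zero[of d1 d2 A a B b m n p q i j, OF z assms(3,4) _ that] assms(5) mn by linarith
  then show "op_comp d1 d2 A B (m,n) = 0"
    unfolding op_comp_cterm by (auto intro!: sum.neutral)
qed

lemma sum_single:
  assumes "finite S" "x \<in> S" "\<And>y. y \<in> S \<Longrightarrow> y \<noteq> x \<Longrightarrow> g y = 0"
  shows "sum g S = g x"
  using assms by (simp add: sum.remove sum.neutral)

lemma comp_eq_conv:
  assumes "is_derivation d1" "is_derivation d2" "low A a" "low B b" "a + b \<le> m + n + 2"
  shows "op_comp d1 d2 A B (m,n) = conv A B (m,n)"
proof -
  have z: "d1 0 = 0" "d2 0 = 0" using assms der_zero by auto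
  have fin: "finite (op_supp A)" using low_finite assms by blast
  have cz: "cterm d1 d2 A B m n i j p q = 0" if "p \<le> i" "q \<le> j" "p \<noteq> 0 \<or> q \<noteq> 0" for i j p q
    using cterm_zero[of d1 d2 A a B b m n p q i j, OF z assms(3,4) _ that(1,2)] assms(5) that(3) by linarith
  have inner: "(\<Sum>p\<le>i. \<Sum>q\<le>j. cterm d1 d2 A B m n i j p q)
      = (if i \<le> m \<and> j \<le> n then A (i,j) * B (m-i, n-j) else 0)" for i j
  proof -
    have "(\<Sum>p\<le>i. \<Sum>q\<le>j. cterm d1 d2 A B m n i j p q) = (\<Sum>q\<le>j. cterm d1 d2 A B m n i j 0 q)"
      by (rule sum_single) (use cz in auto)
    also have "\<dots> = cterm d1 d2 A B m n i j 0 0"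
      by (rule sum_single) (use cz in auto)
    finally show ?thesis by (simp add: cterm_def)
  qed
  have "op_comp d1 d2 A B (m,n) = (\<Sum>(i,j)\<in>op_supp A. if i \<le> m \<and> j \<le> n then A (i,j) * B (m-i, n-j) else 0)"
    unfolding op_comp_cterm by (simp add: inner split_def)
  also have "\<dots> = (\<Sum>(i,j)\<in>op_supp A \<union> {..m}\<times>{..n}. if i \<le> m \<and> j \<le> n then A (i,j) * B (m-i, n-j) else 0)"
    using fin by (intro sum.mono_neutral_left) (auto simp: op_supp_def)
  also have "\<dots> = (\<Sum>(i,j)\<in>{..m}\<times>{..n}. A (i,j) * B (m-i, n-j))"
    using fin by (intro sum.mono_neutral_cong_right) (auto simp: op_supp_def split: if_splits)
  also have "\<dots> = conv A B (m,n)"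
    by (simp add: conv_def sum.cartesian_product)
  finally show ?thesis .
qed

lemma conv_low:
  assumes "low A a" "low B b" "a + b \<le> m + n + 1"
  shows "conv A B (m,n) = 0"
  unfolding conv_def prod.case
proof (intro sum.neutral ballI)
  fix r l assume rl: "r \<in> {..m}" "l \<in> {..n}"
  show "A (r,l) * B (m-r, n-l) = 0"
  proof (cases "A (r,l) = 0")
    case False
    then have "r + l < a" using assms(1) unfolding low_def by (meson not_le)
    then have "b \<le> (m-r) + (n-l)" using rl assms(3) by auto
    then show ?thesis using assms(2) by (simp add: low_def)
  qed simp
qed

lemma conv_cong:
  assumes "\<And>r l. r \<le> m \<Longrightarrow> l \<le> n \<Longrightarrow> A (r,l) \<noteq> 0 \<Longrightarrow> B (m-r, n-l) = B' (m-r, n-l)"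
  shows "conv A B (m,n) = conv A B' (m,n)"
  unfolding conv_def prod.case
  by (intro sum.cong refl) (metis assms atMost_iff mult_zero_left)



lemma op_comp_list_Nil[simp]: "op_comp_list d1 d2 [] = op_one"
  by (simp add: op_comp_list_def)
lemma op_comp_list_Cons[simp]: "op_comp_list d1 d2 (F # Fs) = op_comp d1 d2 F (op_comp_list d1 d2 Fs)"
  by (simp add: op_comp_list_def)

definition mkF :: "'a::comm_monoid_add poly poly \<Rightarrow> 'a poly poly \<Rightarrow> 'a diffop" where
  "mkF S c = (\<lambda>x. opT S x + opT c x)"

definition rest :: "'a::comm_monoid_mult list \<Rightarrow> nat \<Rightarrow> 'a" where
  "rest Ss i = prod_list (take i Ss @ drop (Suc i) Ss)"

lemma rest_Cons_0[simp]: "rest (S # Ss) 0 = prod_list Ss" by (simp add: rest_def)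
lemma rest_Cons_Suc[simp]: "rest (S # Ss) (Suc i) = S * rest Ss i" by (simp add: rest_def)

lemma low_zero_fun: "low (\<lambda>x. 0) t" by (simp add: low_def)
lemma low_add: "low A t \<Longrightarrow> low B t \<Longrightarrow> low (\<lambda>x. A x + B x) t" for A B :: "'a::monoid_add diffop" by (simp add: low_def)
lemma low_diff: "low A t \<Longrightarrow> low B t \<Longrightarrow> low (\<lambda>x. A x - B x) t" for A B :: "'a::ab_group_add diffop" by (simp add: low_def)
lemma low_mono: "low A t \<Longrightarrow> t \<le> t' \<Longrightarrow> low A t'" by (auto simp: low_def)

lemma opT_0: "opT 0 = (\<lambda>x. 0)" by (auto simp: opT_def)

lemma claim:
  fixes d1 d2 :: "'a::field \<Rightarrow> 'a"
  assumes der: "is_derivation d1" "is_derivation d2"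
  shows "length cs = length Ss \<Longrightarrow> length ns = length Ss
   \<Longrightarrow> (\<forall>i<length Ss. homogeneous (Ss!i) (ns!i))
   \<Longrightarrow> (\<forall>i<length Ss. homogeneous (cs!i) (ns!i - 1) \<and> (ns!i = 0 \<longrightarrow> cs!i = 0))
   \<Longrightarrow> low (op_comp_list d1 d2 (map opT Ss)) (Suc (sum_list ns))
   \<and> low (\<lambda>x. op_comp_list d1 d2 (map2 mkF Ss cs) x - op_comp_list d1 d2 (map opT Ss) x) (sum_list ns)
   \<and> (\<forall>m n. m + n = sum_list ns \<longrightarrow> op_comp_list d1 d2 (map opT Ss) (m,n) = biv_coeff (prod_list Ss) m n)
   \<and> (\<forall>m n. Suc (m + n) = sum_list ns \<longrightarrow>
        op_comp_list d1 d2 (map2 mkF Ss cs) (m,n) - op_comp_list d1 d2 (map opT Ss) (m,n)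
          = biv_coeff (\<Sum>i<length Ss. cs!i * rest Ss i) m n)"
proof (induct Ss arbitrary: cs ns)
  case Nil
  then show ?case by (auto simp: low_def op_one_def biv_coeff_1)
next
  case (Cons S Ss)
  from Cons.prems obtain c cs' n ns' where cs: "cs = c # cs'" and ns: "ns = n # ns'"
    by (cases cs; cases ns) auto
  have hS: "homogeneous S n" using Cons.prems(3) ns by force
  have hc: "homogeneous c (n - 1)" "n = 0 \<longrightarrow> c = 0" using Cons.prems(4) ns cs by force+
  have IH: "low (op_comp_list d1 d2 (map opT Ss)) (Suc (sum_list ns'))
   \<and> low (\<lambda>x. op_comp_list d1 d2 (map2 mkF Ss cs') x - op_comp_list d1 d2 (map opT Ss) x) (sum_list ns')
   \<and> (\<forall>m n. m + n = sum_list ns' \<longrightarrow> op_comp_list d1 d2 (map opT Ss) (m,n) = biv_coeff (prod_list Ss) m n)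
   \<and> (\<forall>m n. Suc (m + n) = sum_list ns' \<longrightarrow>
        op_comp_list d1 d2 (map2 mkF Ss cs') (m,n) - op_comp_list d1 d2 (map opT Ss) (m,n)
          = biv_coeff (\<Sum>i<length Ss. cs'!i * rest Ss i) m n)"
  proof (rule Cons.hyps)
    show "length cs' = length Ss" "length ns' = length Ss" using Cons.prems cs ns by auto
    show "\<forall>i<length Ss. homogeneous (Ss ! i) (ns' ! i)"
    proof (intro allI impI)
      fix i assume "i < length Ss" then show "homogeneous (Ss ! i) (ns' ! i)"
        using Cons.prems(3)[rule_format, of "Suc i"] ns by simp
    qed
    show "\<forall>i<length Ss. homogeneous (cs' ! i) (ns' ! i - 1) \<and> (ns' ! i = 0 \<longrightarrow> cs' ! i = 0)"
    proof (intro allI impI)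
      fix i assume "i < length Ss" then show "homogeneous (cs' ! i) (ns' ! i - 1) \<and> (ns' ! i = 0 \<longrightarrow> cs' ! i = 0)"
        using Cons.prems(4)[rule_format, of "Suc i"] ns cs by simp
    qed
  qed
  define X0 where "X0 = op_comp_list d1 d2 (map opT Ss)"
  define X where "X = op_comp_list d1 d2 (map2 mkF Ss cs')"
  define Y where "Y = (\<lambda>x. X x - X0 x)"
  define T where "T = opT S"
  define G where "G = opT c"
  define s' where "s' = sum_list ns'"
  define Q where "Q = (\<Sum>i<length Ss. cs'!i * rest Ss i)"
  have lX0: "low X0 (Suc s')" and lY: "low Y s'"
   and e2: "\<And>m n. m + n = s' \<Longrightarrow> X0 (m,n) = biv_coeff (prod_list Ss) m n"
   and e3: "\<And>m n. Suc (m + n) = s' \<Longrightarrow> Y (m,n) = biv_coeff Q m n"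
    using IH unfolding X0_def X_def Y_def s'_def Q_def by auto
  have XY: "X = (\<lambda>x. X0 x + Y x)" by (simp add: Y_def)
  have lX: "low X (Suc s')" unfolding XY by (intro low_add lX0 low_mono[OF lY]) auto
  have lT: "low T (Suc n)" unfolding T_def by (rule low_opT[OF hS])
  have lG: "low G n"
  proof (cases "n = 0")
    case True then show ?thesis using hc by (simp add: G_def opT_0 low_zero_fun)
  next
    case False then show ?thesis using low_opT[OF hc(1)] by (simp add: G_def)
  qed
  have fT: "finite (op_supp T)" using low_finite[OF lT] .
  have fG: "finite (op_supp G)" using low_finite[OF lG] .
  have compT: "op_comp_list d1 d2 (map opT (S # Ss)) = op_comp d1 d2 T X0"
    by (simp add: T_def X0_def)
  have compF: "op_comp_list d1 d2 (map2 mkF (S # Ss) cs) = op_comp d1 d2 (\<lambda>x. T x + G x) X"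
    by (simp add: cs X_def mkF_def T_def G_def)
  have D: "op_comp_list d1 d2 (map2 mkF (S # Ss) cs) (m,k) - op_comp_list d1 d2 (map opT (S # Ss)) (m,k)
     = op_comp d1 d2 T Y (m,k) + op_comp d1 d2 G X (m,k)" for m k
    unfolding compF compT op_comp_add1[OF fT fG]
    by (subst XY, subst op_comp_add2[OF der]) simp
  have s: "sum_list ns = n + s'" by (simp add: ns s'_def)
  have L1: "low (op_comp_list d1 d2 (map opT (S # Ss))) (Suc (sum_list ns))"
    unfolding compT s by (rule comp_low[OF der lT lX0]) simp
  have L2: "low (\<lambda>x. op_comp_list d1 d2 (map2 mkF (S # Ss) cs) x - op_comp_list d1 d2 (map opT (S # Ss)) x) (sum_list ns)"
  proof -
    have a1: "low (op_comp d1 d2 T Y) (n + s')" by (rule comp_low[OF der lT lY]) simp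
    have a2: "low (op_comp d1 d2 G X) (n + s')" by (rule comp_low[OF der lG lX]) simp
    show ?thesis unfolding s low_def
    proof (intro allI impI)
      fix i j assume ij: "n + s' \<le> i + j"
      note a = a1 a2
      show "op_comp_list d1 d2 (map2 mkF (S # Ss) cs) (i, j) - op_comp_list d1 d2 (map opT (S # Ss)) (i, j) = 0"
        unfolding D using a ij by (simp add: low_def)
    qed
  qed
  have hT: "\<And>r l. T (r,l) \<noteq> 0 \<Longrightarrow> r + l = n" using hS by (simp add: T_def homogeneous_def)
  have hG: "\<And>r l. G (r,l) \<noteq> 0 \<Longrightarrow> r + l + 1 = n"
    using hc by (cases "n = 0") (auto simp: G_def homogeneous_def)
  have E2: "op_comp_list d1 d2 (map opT (S # Ss)) (m,k) = biv_coeff (prod_list (S # Ss)) m k"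
    if "m + k = sum_list ns" for m k
  proof -
    have "op_comp_list d1 d2 (map opT (S # Ss)) (m,k) = conv T X0 (m,k)"
      unfolding compT by (rule comp_eq_conv[OF der lT lX0]) (use that s in simp)
    also have "\<dots> = conv T (opT (prod_list Ss)) (m,k)"
      by (rule conv_cong) (use that s hT e2 in force)
    also have "\<dots> = biv_coeff (prod_list (S # Ss)) m k"
      by (simp add: biv_coeff_mult T_def)
    finally show ?thesis .
  qed
  have E3: "op_comp_list d1 d2 (map2 mkF (S # Ss) cs) (m,k) - op_comp_list d1 d2 (map opT (S # Ss)) (m,k)
          = biv_coeff (\<Sum>i<length (S # Ss). cs!i * rest (S # Ss) i) m k"
    if mk: "Suc (m + k) = sum_list ns" for m k
  proof -
    have "op_comp d1 d2 T Y (m,k) = conv T Y (m,k)"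
      by (rule comp_eq_conv[OF der lT lY]) (use mk s in simp)
    also have "\<dots> = conv T (opT Q) (m,k)"
      by (rule conv_cong) (use mk s hT e3 in force)
    also have "\<dots> = biv_coeff (S * Q) m k" by (simp add: biv_coeff_mult T_def)
    finally have 1: "op_comp d1 d2 T Y (m,k) = biv_coeff (S * Q) m k" .
    have "op_comp d1 d2 G X (m,k) = conv G X (m,k)"
      by (rule comp_eq_conv[OF der lG lX]) (use mk s in simp)
    also have "\<dots> = conv G (opT (prod_list Ss)) (m,k)"
    proof (rule conv_cong)
      fix r l assume rl: "r \<le> m" "l \<le> k" "G (r,l) \<noteq> 0"
      then have "m - r + (k - l) = s'" using hG[OF rl(3)] mk s by linarith
      moreover then have "Y (m-r, k-l) = 0" using lY by (simp add: low_def)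
      ultimately show "X (m - r, k - l) = opT (prod_list Ss) (m - r, k - l)"
        using e2 by (simp add: XY)
    qed
    also have "\<dots> = biv_coeff (c * prod_list Ss) m k" by (simp add: biv_coeff_mult G_def)
    finally have 2: "op_comp d1 d2 G X (m,k) = biv_coeff (c * prod_list Ss) m k" .
    have "(\<Sum>i<length (S # Ss). cs!i * rest (S # Ss) i) = c * prod_list Ss + S * Q"
      unfolding Q_def cs by (simp add: sum.lessThan_Suc_shift sum_distrib_left mult.left_commute del: sum.lessThan_Suc)
    then show ?thesis unfolding D 1 2 by simp
  qed
  show ?case using L1 L2 E2 E3 by blast
qed



definition de :: "'a::comm_semiring_1 poly poly \<Rightarrow> 'a poly" where "de P = poly P 1"
definition hom :: "nat \<Rightarrow> 'a::comm_monoid_add poly \<Rightarrow> 'a poly poly" where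
  "hom m f = polyOf (\<lambda>(i,j). coeff f i) m"

lemma de_mult: "de (P * Q) = de P * de Q" by (simp add: de_def)
lemma de_add: "de (P + Q) = de P + de Q" by (simp add: de_def)
lemma de_diff: "de (P - Q) = de P - de (Q::'a::comm_ring_1 poly poly)" by (simp add: de_def)
lemma de_0[simp]: "de 0 = 0" by (simp add: de_def)
lemma de_1[simp]: "de 1 = 1" by (simp add: de_def)
lemma de_prod_list: "de (prod_list Ps) = prod_list (map de Ps)"
  by (induct Ps) (simp_all add: de_mult)

lemma de_coeff:
  fixes P :: "'a::comm_semiring_1 poly poly"
  assumes "homogeneous P m"
  shows "coeff (de P) i = (if i \<le> m then biv_coeff P i (m-i) else 0)"
proof -
  have h: "biv_coeff P i j = (if j = m - i then (if i \<le> m then biv_coeff P i (m-i) else 0) else 0)" for j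
  proof (cases "i + j = m")
    case True then show ?thesis by auto
  next
    case False
    then have "biv_coeff P i j = 0" using assms unfolding homogeneous_alt by blast
    moreover have "\<not> (j = m - i \<and> i \<le> m)" using False by auto
    ultimately show ?thesis by auto
  qed
  have "coeff (de P) i = (\<Sum>j\<le>degree P. biv_coeff P i j)"
    by (simp add: de_def poly_altdef coeff_sum biv_coeff_def)
  also have "\<dots> = (\<Sum>j\<le>degree P. if j = m - i then (if i \<le> m then biv_coeff P i (m-i) else 0) else 0)"
    by (intro sum.cong refl) (rule h)
  also have "\<dots> = (if i \<le> m then biv_coeff P i (m-i) else 0)"
  proof (cases "m - i \<le> degree P")
    case False
    then have "coeff P (m - i) = 0" by (simp add: coeff_eq_0)
    then show ?thesis using False by (simp add: biv_coeff_def)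
  qed simp
  finally show ?thesis .
qed

lemma degree_de: "homogeneous P m \<Longrightarrow> degree (de P) \<le> m"
  by (rule degree_le) (simp add: de_coeff)

lemma biv_coeff_hom: "biv_coeff (hom m f) i j = (if i + j = m then coeff f i else 0)"
  by (simp add: hom_def biv_coeff_polyOf)

lemma homogeneous_hom: "homogeneous (hom m f) m"
  by (simp add: hom_def homogeneous_polyOf)

lemma hom_0[simp]: "hom m 0 = 0"
  by (rule biv_eqI) (simp add: biv_coeff_hom)

lemma de_hom: "degree (f::'a::comm_semiring_1 poly) \<le> m \<Longrightarrow> de (hom m f) = f"
  by (rule poly_eqI) (auto simp: de_coeff[OF homogeneous_hom] biv_coeff_hom coeff_eq_0)

lemma hom_de: "homogeneous (P::'a::comm_semiring_1 poly poly) m \<Longrightarrow> hom m (de P) = P"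
  by (rule biv_eqI) (auto simp: biv_coeff_hom de_coeff homogeneous_alt)

lemma homog_de_zero: "homogeneous (P::'a::comm_semiring_1 poly poly) m \<Longrightarrow> de P = 0 \<Longrightarrow> P = 0"
  using hom_de by fastforce

lemma homog_unique:
  assumes "P \<noteq> 0" "homogeneous P a" "homogeneous P b" shows "a = b"
proof -
  obtain i j where "biv_coeff P i j \<noteq> 0"
    using assms(1) biv_eqI[of P 0] by auto
  then show ?thesis using assms(2,3) by (auto simp: homogeneous_def)
qed

definition bez :: "'a::comm_ring_1 \<Rightarrow> 'a \<Rightarrow> bool" where
  "bez f g \<longleftrightarrow> (\<exists>x y. x * f + y * g = 1)"

lemma bez_sym: "bez f g \<Longrightarrow> bez g f"
  unfolding bez_def by (metis add.commute)

lemma bez_1: "bez f 1" unfolding bez_def by (rule exI[of _ 0], rule exI[of _ 1]) simp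

lemma bez_mult:
  assumes "bez f g1" "bez f g2" shows "bez f (g1 * g2)"
proof -
  obtain x1 y1 x2 y2 where e1: "x1 * f + y1 * g1 = 1" and e2: "x2 * f + y2 * g2 = 1"
    using assms unfolding bez_def by blast
  have "(x1 * x2 * f + x1 * y2 * g2 + y1 * g1 * x2) * f + (y1 * y2) * (g1 * g2)
      = (x1 * f + y1 * g1) * (x2 * f + y2 * g2)" by (simp add: algebra_simps)
  also have "\<dots> = 1" by (simp add: e1 e2)
  finally show ?thesis unfolding bez_def by blast
qed

lemma bez_prod_list: "(\<And>h. h \<in> set hs \<Longrightarrow> bez f h) \<Longrightarrow> bez f (prod_list hs)"
  by (induct hs) (auto intro: bez_1 bez_mult)

lemma coprime_bez:
  fixes f g :: "'a::field poly"
  assumes cop: "coprime f g" and nz: "f \<noteq> 0"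
  shows "bez f g"
proof -
  let ?S = "\<lambda>h. h \<noteq> 0 \<and> (\<exists>x y. h = x * f + y * g)"
  have "?S f" using nz by (intro conjI exI[of _ 1] exI[of _ 0]) auto
  then obtain h where hS: "?S h" and hmin: "\<And>h'. ?S h' \<Longrightarrow> degree h \<le> degree h'"
    using ex_has_least_nat[of ?S f degree] by blast
  from hS obtain x y where h: "h = x * f + y * g" and h0: "h \<noteq> 0" by blast
  have dv: "h dvd q" if q: "q = xq * f + yq * g" for q xq yq
  proof (rule ccontr)
    assume "\<not> h dvd q"
    then have "q mod h \<noteq> 0" by auto
    moreover have "q mod h = (xq - q div h * x) * f + (yq - q div h * y) * g"
    proof -
      have "q mod h = q - q div h * h" by (simp add: minus_div_mult_eq_mod)
      also have "\<dots> = (xq - q div h * x) * f + (yq - q div h * y) * g"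
        by (simp add: q h algebra_simps)
      finally show ?thesis .
    qed
    ultimately have "?S (q mod h)" by blast
    then have "degree h \<le> degree (q mod h)" by (rule hmin)
    moreover have "degree (q mod h) < degree h" using degree_mod_less' h0 \<open>q mod h \<noteq> 0\<close> by blast
    ultimately show False by simp
  qed
  have "h dvd f" by (rule dv[of f 1 0]) simp
  moreover have "h dvd g" by (rule dv[of g 0 1]) simp
  ultimately have "is_unit h" using cop unfolding coprime_def by blast
  then obtain k where "1 = h * k" by (auto elim: dvdE)
  then have "(k * x) * f + (k * y) * g = 1" by (simp add: h algebra_simps)
  then show ?thesis unfolding bez_def by blast
qed

definition dl :: "'a::zero poly \<Rightarrow> nat \<Rightarrow> bool" where "dl w n \<longleftrightarrow> w = 0 \<or> degree w < n"

lemma dl_mult: "dl u b \<Longrightarrow> degree f \<le> a \<Longrightarrow> dl (u * (f::'a::idom poly)) (a + b)"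
  unfolding dl_def by (cases "f = 0"; cases "u = 0") (auto simp: degree_mult_eq)

lemma dl_diff: "dl u n \<Longrightarrow> dl w n \<Longrightarrow> dl (u - (w::'a::comm_ring poly)) n"
  unfolding dl_def by (metis degree_diff_less diff_0 diff_zero degree_minus)

lemma dl_cancel: "dl (v * g) (a + b) \<Longrightarrow> g \<noteq> 0 \<Longrightarrow> degree g = b \<Longrightarrow> dl (v::'a::idom poly) a"
  unfolding dl_def by (cases "v = 0") (auto simp: degree_mult_eq)

lemma two_uni0:
  fixes f g p :: "'a::field poly"
  assumes "bez f g" "f \<noteq> 0" "g \<noteq> 0" "degree f \<le> a" "degree g = b" "dl p (a + b)"
  shows "\<exists>u v. dl u b \<and> dl v a \<and> p = u * f + v * g"
proof -
  obtain x y where xy: "x * f + y * g = 1" using assms(1) unfolding bez_def by blast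
  define u where "u = (p * x) mod g"
  define q where "q = (p * x) div g"
  define v where "v = q * f + p * y"
  have px: "p * x = q * g + u" by (simp add: u_def q_def)
  have "p = p * (x * f + y * g)" by (simp add: xy)
  also have "\<dots> = (p * x) * f + p * y * g" by (simp add: algebra_simps)
  also have "\<dots> = u * f + v * g" by (simp add: px v_def algebra_simps)
  finally have pe: "p = u * f + v * g" .
  have du: "dl u b" unfolding dl_def u_def using degree_mod_less[OF assms(3), of "p * x"] assms(5) by auto
  have "v * g = p - u * f" using pe by simp
  moreover have "dl (p - u * f) (a + b)"
    by (rule dl_diff[OF assms(6)]) (use dl_mult[OF du assms(4)] in \<open>simp add: add.commute\<close>)
  ultimately have "dl v a" using dl_cancel[OF _ assms(3,5)] by metis
  with du pe show ?thesis by blast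
qed

lemma two_uni:
  fixes f g p :: "'a::field poly"
  assumes "bez f g" "f \<noteq> 0" "g \<noteq> 0" "degree f \<le> a" "degree g \<le> b" "degree f = a \<or> degree g = b" "dl p (a + b)"
  shows "\<exists>u v. dl u b \<and> dl v a \<and> p = u * f + v * g"
proof (cases "degree g = b")
  case True then show ?thesis using two_uni0 assms by blast
next
  case False
  then have "degree f = a" using assms(6) by blast
  then obtain v u where "dl v a" "dl u b" "p = v * g + u * f"
    using two_uni0[OF bez_sym[OF assms(1)] assms(3,2,5) _ ] assms(7) by (metis add.commute)
  then show ?thesis by (metis add.commute)
qed



lemma dl_de: "homogeneous P m \<Longrightarrow> m < n \<Longrightarrow> dl (de P) n"
  using degree_de[of P m] by (auto simp: dl_def)

lemma de_hom_dl: "dl u b \<Longrightarrow> de (hom (b - 1) (u::'a::comm_semiring_1 poly)) = u"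
  unfolding dl_def by (metis de_hom de_0 hom_0 Suc_pred' less_Suc_eq_le not_less_zero neq0_conv)

lemma homog_mult_cases:
  fixes U A :: "'a::comm_semiring_1 poly poly"
  assumes "homogeneous U (b - 1)" "b = 0 \<longrightarrow> U = 0" "homogeneous A a" "Suc m = a + b"
  shows "homogeneous (U * A) m"
proof (cases "b = 0")
  case True then show ?thesis using assms by simp
next
  case False
  then have "m = (b - 1) + a" using assms(4) by simp
  then show ?thesis using homogeneous_mult[OF assms(1,3)] by simp
qed

lemma two_hom:
  fixes A B P :: "'a::field poly poly"
  assumes hA: "homogeneous A a" and hB: "homogeneous B b" and "A \<noteq> 0" "B \<noteq> 0"
    and bz: "bez (de A) (de B)" and dg: "degree (de A) = a \<or> degree (de B) = b"
    and hP: "homogeneous P m" and m: "Suc m = a + b"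
  shows "\<exists>U V. homogeneous U (b - 1) \<and> (b = 0 \<longrightarrow> U = 0) \<and> homogeneous V (a - 1) \<and> (a = 0 \<longrightarrow> V = 0)
     \<and> P = U * A + V * B"
proof -
  have nA: "de A \<noteq> 0" using homog_de_zero[OF hA] \<open>A \<noteq> 0\<close> by blast
  have nB: "de B \<noteq> 0" using homog_de_zero[OF hB] \<open>B \<noteq> 0\<close> by blast
  obtain u v where u: "dl u b" and v: "dl v a" and p: "de P = u * de A + v * de B"
    using two_uni[OF bz nA nB degree_de[OF hA] degree_de[OF hB] dg dl_de[OF hP]] m by auto
  define U where "U = hom (b - 1) u"
  define V where "V = hom (a - 1) v"
  have U0: "b = 0 \<longrightarrow> U = 0" using u by (auto simp: U_def dl_def)
  have V0: "a = 0 \<longrightarrow> V = 0" using v by (auto simp: V_def dl_def)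
  have hU: "homogeneous U (b - 1)" by (simp add: U_def homogeneous_hom)
  have hV: "homogeneous V (a - 1)" by (simp add: V_def homogeneous_hom)
  have hZ: "homogeneous (P - U * A - V * B) m"
    using homog_mult_cases[OF hU U0 hA m] homog_mult_cases[OF hV V0 hB] m
    by (intro homogeneous_diff hP) (auto simp: add.commute)
  have dU: "de U = u" unfolding U_def by (rule de_hom_dl[OF u])
  have dV: "de V = v" unfolding V_def by (rule de_hom_dl[OF v])
  have "de (P - U * A - V * B) = 0"
    by (simp add: de_diff de_mult dU dV p)
  then have "P - U * A - V * B = 0" by (rule homog_de_zero[OF hZ])
  then have "P = U * A + V * B" by (simp add: algebra_simps)
  with hU hV U0 V0 show ?thesis by blast
qed

lemma degree_prod_list_eq:
  fixes hs :: "'a::field poly list"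
  shows "length ns = length hs \<Longrightarrow> (\<forall>j<length hs. hs!j \<noteq> 0 \<and> degree (hs!j) = ns!j)
    \<Longrightarrow> degree (prod_list hs) = sum_list ns"
proof (induct hs arbitrary: ns)
  case Nil then show ?case by simp
next
  case (Cons h hs)
  then obtain n ns' where ns: "ns = n # ns'" by (cases ns) auto
  have h: "h \<noteq> 0" "degree h = n" using Cons.prems(2)[rule_format, of 0] ns by auto
  have t: "\<forall>j<length hs. hs!j \<noteq> 0 \<and> degree (hs!j) = ns'!j"
    using Cons.prems(2) ns by (metis Suc_less_eq length_Cons nth_Cons_Suc)
  have IH: "degree (prod_list hs) = sum_list ns'" using Cons.hyps[of ns'] Cons.prems(1) ns t by simp
  have "prod_list hs \<noteq> 0" using t by (auto simp: prod_list_zero_iff in_set_conv_nth)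
  then show ?case using h IH ns by (simp add: degree_mult_eq)
qed

lemma part1:
  fixes Ss :: "'a::field poly poly list"
  shows "length ns = length Ss \<Longrightarrow>
   (\<forall>i<length Ss. homogeneous (Ss!i) (ns!i) \<and> Ss!i \<noteq> 0) \<Longrightarrow>
   (\<forall>i<length Ss. \<forall>j<length Ss. i \<noteq> j \<longrightarrow> bez (de (Ss!i)) (de (Ss!j))
        \<and> (degree (de (Ss!i)) = ns!i \<or> degree (de (Ss!j)) = ns!j)) \<Longrightarrow>
   homogeneous P m \<Longrightarrow> Suc m = sum_list ns \<Longrightarrow>
   \<exists>cs. length cs = length Ss \<and> (\<forall>i<length Ss. homogeneous (cs!i) (ns!i - 1) \<and> (ns!i = 0 \<longrightarrow> cs!i = 0))
     \<and> P = (\<Sum>i<length Ss. cs!i * rest Ss i)"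
proof (induct Ss arbitrary: ns P m)
  case Nil then show ?case by simp
next
  case (Cons S Ss)
  then obtain n ns' where ns: "ns = n # ns'" by (cases ns) auto
  have len: "length ns' = length Ss" using Cons.prems(1) ns by simp
  have hS: "homogeneous S n" "S \<noteq> 0" using Cons.prems(2)[rule_format, of 0] ns by auto
  have hSs: "\<forall>i<length Ss. homogeneous (Ss!i) (ns'!i) \<and> Ss!i \<noteq> 0"
  proof (intro allI impI)
    fix i assume "i < length Ss"
    then show "homogeneous (Ss!i) (ns'!i) \<and> Ss!i \<noteq> 0" using Cons.prems(2)[rule_format, of "Suc i"] ns by simp
  qed
  have pw: "\<forall>i<length Ss. \<forall>j<length Ss. i \<noteq> j \<longrightarrow> bez (de (Ss!i)) (de (Ss!j))
        \<and> (degree (de (Ss!i)) = ns'!i \<or> degree (de (Ss!j)) = ns'!j)"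
  proof (intro allI impI)
    fix i j assume "i < length Ss" "j < length Ss" "i \<noteq> j"
    then show "bez (de (Ss!i)) (de (Ss!j)) \<and> (degree (de (Ss!i)) = ns'!i \<or> degree (de (Ss!j)) = ns'!j)"
      using Cons.prems(3)[rule_format, of "Suc i" "Suc j"] ns by simp
  qed
  have p0: "bez (de S) (de (Ss!j)) \<and> (degree (de S) = n \<or> degree (de (Ss!j)) = ns'!j)" if "j < length Ss" for j
    using Cons.prems(3)[rule_format, of 0 "Suc j"] ns that by simp
  define g where "g = prod_list Ss"
  define s' where "s' = sum_list ns'"
  have hg: "homogeneous g s'" unfolding g_def s'_def
    by (rule homogeneous_prod_list) (use hSs len in auto)
  have g0: "g \<noteq> 0" unfolding g_def using hSs by (auto simp: prod_list_zero_iff in_set_conv_nth)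
  have deg: "de g = prod_list (map de Ss)" by (simp add: g_def de_prod_list)
  have bz: "bez (de S) (de g)" unfolding deg
    by (rule bez_prod_list) (use p0 in \<open>auto simp: in_set_conv_nth\<close>)
  have dg: "degree (de S) = n \<or> degree (de g) = s'"
  proof (cases "degree (de S) = n")
    case False
    have "degree (prod_list (map de Ss)) = sum_list ns'"
    proof (rule degree_prod_list_eq)
      show "length ns' = length (map de Ss)" using len by simp
      show "\<forall>j<length (map de Ss). map de Ss ! j \<noteq> 0 \<and> degree (map de Ss ! j) = ns' ! j"
      proof (intro allI impI)
        fix j assume j: "j < length (map de Ss)"
        then have "de (Ss!j) \<noteq> 0" using hSs homog_de_zero by fastforce
        then show "map de Ss ! j \<noteq> 0 \<and> degree (map de Ss ! j) = ns' ! j" using p0[of j] False j by auto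
      qed
    qed
    then show ?thesis by (simp add: deg s'_def)
  qed simp
  have m: "Suc m = n + s'" using Cons.prems(5) ns by (simp add: s'_def)
  obtain U V where hU: "homogeneous U (s' - 1)" and U0: "s' = 0 \<longrightarrow> U = 0"
    and hV: "homogeneous V (n - 1)" and V0: "n = 0 \<longrightarrow> V = 0" and P: "P = U * S + V * g"
    using two_hom[OF hS(1) hg hS(2) g0 bz dg Cons.prems(4) m] by blast
  obtain cs' where cs': "length cs' = length Ss"
      "\<forall>i<length Ss. homogeneous (cs'!i) (ns'!i - 1) \<and> (ns'!i = 0 \<longrightarrow> cs'!i = 0)"
      "U = (\<Sum>i<length Ss. cs'!i * rest Ss i)"
  proof (cases "s' = 0")
    case True
    have "ns'!i = 0" if "i < length Ss" for i using True len that by (simp add: s'_def sum_list_eq_0_iff)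
    then show ?thesis using U0 True by (intro that[of "replicate (length Ss) 0"]) auto
  next
    case False
    then have "Suc (s' - 1) = sum_list ns'" unfolding s'_def by linarith
    then show ?thesis using Cons.hyps[OF len hSs pw hU] that by (auto simp: s'_def)
  qed
  show ?case
  proof (intro exI[of _ "V # cs'"] conjI)
    show "length (V # cs') = length (S # Ss)" using cs' by simp
    show "\<forall>i<length (S # Ss). homogeneous ((V # cs') ! i) (ns ! i - 1) \<and> (ns ! i = 0 \<longrightarrow> (V # cs') ! i = 0)"
    proof (intro allI impI)
      fix i assume "i < length (S # Ss)"
      then show "homogeneous ((V # cs') ! i) (ns ! i - 1) \<and> (ns ! i = 0 \<longrightarrow> (V # cs') ! i = 0)"
        using cs'(2) hV V0 ns by (cases i) auto
    qed
    show "P = (\<Sum>i<length (S # Ss). (V # cs') ! i * rest (S # Ss) i)"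
      unfolding P cs'(3) g_def
      by (simp add: sum.lessThan_Suc_shift sum_distrib_left mult.left_commute mult.commute del: sum.lessThan_Suc)
  qed
qed



lemma lift_dvd:
  fixes S :: "'a::field poly poly"
  assumes hS: "homogeneous S a" and S0: "S \<noteq> 0" and hd: "h dvd de S"
  shows "hom (degree h) h dvd S"
proof -
  obtain g where g: "de S = h * g" using hd by (auto elim: dvdE)
  have dS: "de S \<noteq> 0" using homog_de_zero[OF hS] S0 by blast
  then have h0: "h \<noteq> 0" "g \<noteq> 0" using g by auto
  have dsum: "degree h + degree g \<le> a" using degree_de[OF hS] g h0 by (simp add: degree_mult_eq)
  define e where "e = degree h"
  define K where "K = hom (a - e) g"
  have hH: "homogeneous (hom e h * K) a"
    using homogeneous_mult[OF homogeneous_hom homogeneous_hom, of e h "a - e" g] dsum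
    by (simp add: K_def e_def)
  have "de (hom e h * K) = h * g"
    using dsum by (simp add: de_mult K_def e_def de_hom)
  then have "de (hom e h * K - S) = 0" by (simp add: de_diff g)
  then have "hom e h * K - S = 0" by (rule homog_de_zero[OF homogeneous_diff[OF hH hS]])
  then have "S = hom e h * K" by simp
  then show ?thesis by (simp add: e_def)
qed

lemma unit_poly_degree0: "is_unit (p::'b::idom_divide poly) \<Longrightarrow> degree p = 0"
proof -
  assume "is_unit p"
  then obtain k where k: "1 = p * k" by (auto elim: dvdE)
  then have "p \<noteq> 0" "k \<noteq> 0" by auto
  then have "degree (p * k) = degree p + degree k" by (rule degree_mult_eq)
  moreover have "degree (p * k) = 0" by (simp flip: k)
  ultimately have "degree p + degree k = 0" by simp
  then show ?thesis by simp
qed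

lemma x_dvd:
  fixes S :: "'a::field poly poly"
  assumes hS: "homogeneous S a" and dg: "degree (de S) \<noteq> a"
  shows "[:0, 1:] dvd S"
proof -
  have "degree (de S) < a" using degree_de[OF hS] dg by simp
  then have "coeff (de S) a = 0" by (simp add: coeff_eq_0)
  then have za: "biv_coeff S a 0 = 0" using de_coeff[OF hS, of a] by simp
  have "coeff S 0 = 0"
  proof (rule poly_eqI)
    fix i show "coeff (coeff S 0) i = coeff 0 i"
    proof (cases "i = a")
      case True then show ?thesis using za by (simp add: biv_coeff_def)
    next
      case False then show ?thesis using hS by (simp add: homogeneous_alt biv_coeff_def)
    qed
  qed
  then show ?thesis by (simp add: dvd_iff_poly_eq_0[of 0 S] poly_0_coeff_0)
qed

lemma transfer:
  fixes Si Sj :: "'a::field poly poly"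
  assumes hi: "homogeneous Si a" and hj: "homogeneous Sj b" and "Si \<noteq> 0" "Sj \<noteq> 0"
    and cop: "coprime Si Sj"
  shows "bez (de Si) (de Sj) \<and> (degree (de Si) = a \<or> degree (de Sj) = b)"
proof
  have "coprime (de Si) (de Sj)"
  proof (rule coprimeI)
    fix h assume h1: "h dvd de Si" and h2: "h dvd de Sj"
    have "is_unit (hom (degree h) h)"
      using cop lift_dvd[OF hi \<open>Si \<noteq> 0\<close> h1] lift_dvd[OF hj \<open>Sj \<noteq> 0\<close> h2] unfolding coprime_def by blast
    then obtain K where "1 = hom (degree h) h * K" by (auto elim: dvdE)
    then have "de 1 = de (hom (degree h) h * K)" by simp
    then have "1 = h * de K" by (simp add: de_mult de_hom)
    then show "is_unit h" by (rule dvdI)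
  qed
  moreover have "de Si \<noteq> 0" using homog_de_zero[OF hi] \<open>Si \<noteq> 0\<close> by blast
  ultimately show "bez (de Si) (de Sj)" by (rule coprime_bez)
next
  show "degree (de Si) = a \<or> degree (de Sj) = b"
  proof (rule ccontr)
    assume "\<not> ?thesis"
    then have "[:0,1:] dvd Si" "[:0,1:] dvd Sj" using x_dvd hi hj by blast+
    then have "is_unit ([:0,1:] :: 'a poly poly)" using cop unfolding coprime_def by blast
    then have "degree ([:0,1:] :: 'a poly poly) = 0" by (rule unit_poly_degree0)
    then show False by simp
  qed
qed



lemma op_sym_coeff:
  assumes "op_valid A" "op_supp A \<noteq> {}" "Max ((\<lambda>(i, j). i + j) ` op_supp A) = D"
  shows "biv_coeff (op_sym A) i j = (if i + j = D then A (i,j) else 0)"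
proof -
  let ?T = "{(i, j). (i, j) \<in> op_supp A \<and> i + j = D}"
  have fin: "finite ?T" using assms(1) unfolding op_valid_def
    by (rule finite_subset[rotated]) auto
  have "biv_coeff (op_sym A) i j = (\<Sum>x\<in>?T. biv_coeff (case x of (k, l) \<Rightarrow> biv_monom (A (k, l)) k l) i j)"
    using assms(2,3) by (simp add: op_sym_def Let_def biv_coeff_sum)
  also have "\<dots> = (\<Sum>x\<in>?T. if x = (i,j) then A (i,j) else 0)"
    by (intro sum.cong refl) (auto simp: biv_coeff_monom split: if_splits)
  also have "\<dots> = (if (i,j) \<in> ?T then A (i,j) else 0)"
    using fin by (simp add: sum.delta')
  also have "\<dots> = (if i + j = D then A (i,j) else 0)"
    by (auto simp: op_supp_def)
  finally show ?thesis .
qed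

lemma max_char:
  assumes "finite (op_supp A)" "(i0, j0) \<in> op_supp A" "i0 + j0 = D" "\<And>i j. (i,j) \<in> op_supp A \<Longrightarrow> i + j \<le> D"
  shows "Max ((\<lambda>(i, j). i + j) ` op_supp A) = D"
  using assms by (intro Max_eqI) (auto intro: rev_image_eqI)

lemma ord_bound:
  assumes "op_valid R" "\<And>i j. d \<le> i + j + 1 \<Longrightarrow> R (i,j) = 0"
  shows "op_ord R \<le> ereal (real d - 2)"
proof (cases "op_supp R = {}")
  case True then show ?thesis by (simp add: op_ord_def)
next
  case False
  have fin: "finite ((\<lambda>(i, j). i + j) ` op_supp R)" using assms(1) by (simp add: op_valid_def)
  have "Max ((\<lambda>(i, j). i + j) ` op_supp R) \<in> (\<lambda>(i, j). i + j) ` op_supp R"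
    using fin False by (intro Max_in) auto
  then obtain i j where ij: "(i,j) \<in> op_supp R" "Max ((\<lambda>(i, j). i + j) ` op_supp R) = i + j" by auto
  then have "R (i,j) \<noteq> 0" by (simp add: op_supp_def)
  have "i + j + 2 \<le> d"
  proof (rule ccontr)
    assume "\<not> i + j + 2 \<le> d"
    then have "d \<le> i + j + 1" by simp
    then show False using assms(2) \<open>R (i,j) \<noteq> 0\<close> by blast
  qed
  then show ?thesis using False ij by (simp add: op_ord_def)
qed

lemma op_sym_mkF:
  fixes S c :: "'a::field poly poly"
  assumes hS: "homogeneous S n" and S0: "S \<noteq> 0" and hc: "homogeneous c (n - 1)" "n = 0 \<longrightarrow> c = 0"
  shows "op_sym (mkF S c) = S" "op_valid (mkF S c)"
proof -
  have cn: "biv_coeff c i j = 0" if "i + j = n" for i j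
  proof (cases "n = 0")
    case True then show ?thesis using hc by simp
  next
    case False
    then have "i + j \<noteq> n - 1" using that by simp
    then show ?thesis using hc(1) unfolding homogeneous_alt by blast
  qed
  have low: "low (mkF S c) (Suc n)"
    unfolding mkF_def using hS hc by (auto simp: low_def homogeneous_alt)
  then show v: "op_valid (mkF S c)" using low_finite by (auto simp: op_valid_def)
  obtain i0 j0 where "biv_coeff S i0 j0 \<noteq> 0" using S0 biv_eqI[of S 0] by auto
  then have ij0: "i0 + j0 = n" "(i0, j0) \<in> op_supp (mkF S c)"
    using hS cn by (auto simp: homogeneous_def op_supp_def mkF_def)
  have mx: "Max ((\<lambda>(i, j). i + j) ` op_supp (mkF S c)) = n"
  proof (rule max_char[OF _ ij0(2,1)])
    show "finite (op_supp (mkF S c))" using v by (simp add: op_valid_def)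
    fix i j assume "(i, j) \<in> op_supp (mkF S c)"
    then have "mkF S c (i,j) \<noteq> 0" by (simp add: op_supp_def)
    then show "i + j \<le> n" using low unfolding low_def by (meson not_less_eq_eq)
  qed
  show "op_sym (mkF S c) = S"
  proof (rule biv_eqI)
    fix i j
    have ne: "op_supp (mkF S c) \<noteq> {}" using ij0 by blast
    have e: "biv_coeff (op_sym (mkF S c)) i j = (if i + j = n then mkF S c (i,j) else 0)"
      by (rule op_sym_coeff[OF v ne mx])
    show "biv_coeff (op_sym (mkF S c)) i j = biv_coeff S i j"
    proof (cases "i + j = n")
      case True then show ?thesis using e cn[OF True] by (simp add: mkF_def)
    next
      case False then show ?thesis using e hS unfolding homogeneous_alt by simp
    qed
  qed
qed

lemma prod_rest: "i < length Ss \<Longrightarrow> prod_list Ss = Ss ! i * rest Ss i"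
  unfolding rest_def
  by (subst id_take_nth_drop[of i Ss]) (simp_all add: mult.left_commute)



theorem mainTheorem10:
  fixes d1 d2 :: "'a::field \<Rightarrow> 'a"
    and L :: "'a diffop"
    and d :: nat
    and Ss :: "'a poly poly list"
  assumes "is_derivation d1" and "is_derivation d2"
    and "\<forall>a. d1 (d2 a) = d2 (d1 a)"
    and "op_valid L"
    and "op_ord L = ereal (real d)"
    and "Ss \<noteq> []"
    and "op_sym L = prod_list Ss"
    and "\<forall>S\<in>set Ss. \<exists>m. homogeneous S m"
    and "\<forall>i<length Ss. \<forall>j<length Ss. i \<noteq> j \<longrightarrow> coprime (Ss ! i) (Ss ! j)"
  shows "(\<forall>P m. Suc m = d \<and> homogeneous P m \<longrightarrow>
            P \<in> gen_ideal (map (\<lambda>S. op_sym L div S) Ss))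
       \<and> (\<forall>R. common_obstacle d1 d2 L Ss R \<longrightarrow> op_ord R \<le> ereal (real d - 2))"
proof -
  note der = assms(1,2)
  have supp: "op_supp L \<noteq> {}" and mx: "Max ((\<lambda>(i,j). i + j) ` op_supp L) = d"
    using assms(5) by (auto simp: op_ord_def split: if_splits)
  have fin: "finite (op_supp L)" using assms(4) by (simp add: op_valid_def)
  have lowL: "low L (Suc d)"
    unfolding low_def
  proof (intro allI impI)
    fix i j assume ij: "Suc d \<le> i + j"
    show "L (i,j) = 0"
    proof (rule ccontr)
      assume "L (i,j) \<noteq> 0"
      then have "(i,j) \<in> op_supp L" by (simp add: op_supp_def)
      then have "i + j \<le> Max ((\<lambda>(i,j). i + j) ` op_supp L)"
        using fin by (intro Max_ge) (auto intro: rev_image_eqI)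
      then show False using ij mx by simp
    qed
  qed
  have symc: "biv_coeff (op_sym L) i j = (if i + j = d then L (i,j) else 0)" for i j
    using op_sym_coeff[OF assms(4) supp mx] .
  have "Max ((\<lambda>(i,j). i + j) ` op_supp L) \<in> (\<lambda>(i,j). i + j) ` op_supp L"
    using fin supp by (intro Max_in) auto
  then obtain i0 j0 where ij0: "(i0, j0) \<in> op_supp L" "i0 + j0 = d" using mx by auto
  have sym0: "op_sym L \<noteq> 0"
  proof
    assume "op_sym L = 0"
    then have "biv_coeff (op_sym L) i0 j0 = 0" by simp
    then show False using symc[of i0 j0] ij0 by (simp add: op_supp_def)
  qed
  have hsym: "homogeneous (op_sym L) d" unfolding homogeneous_alt using symc by simp
  define k where "k = length Ss"
  have S0: "Ss ! i \<noteq> 0" if "i < k" for i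
  proof
    assume "Ss ! i = 0"
    then have "0 \<in> set Ss" using that nth_mem[of i Ss] by (simp add: k_def)
    then have "prod_list Ss = 0" by (simp add: prod_list_zero_iff)
    then show False using sym0 assms(7) by simp
  qed
  define ns where "ns = map (\<lambda>S. SOME m. homogeneous S m) Ss"
  have lenns: "length ns = length Ss" by (simp add: ns_def)
  have hS: "homogeneous (Ss ! i) (ns ! i)" if "i < k" for i
  proof -
    have "\<exists>m. homogeneous (Ss ! i) m" using assms(8) that nth_mem[of i Ss] by (simp add: k_def)
    then show ?thesis using that by (simp add: ns_def k_def someI_ex)
  qed
  have sumd: "sum_list ns = d"
  proof -
    have "homogeneous (prod_list Ss) (sum_list ns)"
      by (rule homogeneous_prod_list) (use hS lenns in \<open>auto simp: k_def\<close>)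
    then show ?thesis using homog_unique[OF sym0 _ hsym] assms(7) by simp
  qed
  have pw: "\<forall>i<length Ss. \<forall>j<length Ss. i \<noteq> j \<longrightarrow> bez (de (Ss!i)) (de (Ss!j))
        \<and> (degree (de (Ss!i)) = ns!i \<or> degree (de (Ss!j)) = ns!j)"
  proof (intro allI impI)
    fix i j assume "i < length Ss" "j < length Ss" "i \<noteq> j"
    then show "bez (de (Ss!i)) (de (Ss!j)) \<and> (degree (de (Ss!i)) = ns!i \<or> degree (de (Ss!j)) = ns!j)"
      using transfer[OF hS hS S0 S0] assms(9) by (simp add: k_def)
  qed
  have hS0: "\<forall>i<length Ss. homogeneous (Ss!i) (ns!i) \<and> Ss!i \<noteq> 0"
    using hS S0 by (simp add: k_def)
  have P1: "\<exists>cs. length cs = length Ss \<and> (\<forall>i<length Ss. homogeneous (cs!i) (ns!i - 1) \<and> (ns!i = 0 \<longrightarrow> cs!i = 0))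
     \<and> P = (\<Sum>i<length Ss. cs!i * rest Ss i)" if "homogeneous P m" "Suc m = d" for P :: "'a poly poly" and m
    using part1[OF lenns hS0 pw that(1)] that(2) sumd by simp
  have divr: "op_sym L div Ss ! i = rest Ss i" if "i < length Ss" for i
    using prod_rest[OF that] S0[of i] that assms(7) by (simp add: k_def)
  show ?thesis
  proof (intro conjI allI impI)
    fix P :: "'a poly poly" and m assume a: "Suc m = d \<and> homogeneous P m"
    then obtain cs where cs: "P = (\<Sum>i<length Ss. cs!i * rest Ss i)" using P1 by blast
    show "P \<in> gen_ideal (map (\<lambda>S. op_sym L div S) Ss)"
      unfolding gen_ideal_def
    proof (intro CollectI exI[of _ "\<lambda>i. cs ! i"])
      show "P = (\<Sum>i<length (map (\<lambda>S. op_sym L div S) Ss). cs ! i * map (\<lambda>S. op_sym L div S) Ss ! i)"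
        unfolding cs by (simp add: divr)
    qed
  next
    fix R assume co: "common_obstacle d1 d2 L Ss R"
    define compT where "compT = op_comp_list d1 d2 (map opT Ss)"
    obtain cs where cs1: "length cs = length Ss"
      and cs2: "\<forall>i<length Ss. homogeneous (cs!i) (ns!i - 1) \<and> (ns!i = 0 \<longrightarrow> cs!i = 0)"
      and cs3: "d \<noteq> 0 \<Longrightarrow> polyOf (\<lambda>x. L x - compT x) (d - 1) = (\<Sum>i<length Ss. cs!i * rest Ss i)"
    proof (cases "d = 0")
      case True
      have "ns ! i = 0" if "i < length Ss" for i
        using sumd True lenns that by (simp add: sum_list_eq_0_iff)
      then show ?thesis using True by (intro that[of "replicate (length Ss) 0"]) auto
    next
      case False
      then show ?thesis using P1[OF homogeneous_polyOf, of "d - 1" "\<lambda>x. L x - compT x"] that by auto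
    qed
    have C: "low (op_comp_list d1 d2 (map opT Ss)) (Suc (sum_list ns))
     \<and> low (\<lambda>x. op_comp_list d1 d2 (map2 mkF Ss cs) x - op_comp_list d1 d2 (map opT Ss) x) (sum_list ns)
     \<and> (\<forall>m n. m + n = sum_list ns \<longrightarrow> op_comp_list d1 d2 (map opT Ss) (m,n) = biv_coeff (prod_list Ss) m n)
     \<and> (\<forall>m n. Suc (m + n) = sum_list ns \<longrightarrow>
        op_comp_list d1 d2 (map2 mkF Ss cs) (m,n) - op_comp_list d1 d2 (map opT Ss) (m,n)
          = biv_coeff (\<Sum>i<length Ss. cs!i * rest Ss i) m n)"
      by (rule claim[OF der cs1 lenns _ cs2]) (use hS in \<open>simp add: k_def\<close>)
    define F where "F = op_comp_list d1 d2 (map2 mkF Ss cs)"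
    have C1: "low compT (Suc d)" and C2: "low (\<lambda>x. F x - compT x) d"
      and C3: "\<And>m n. m + n = d \<Longrightarrow> compT (m,n) = biv_coeff (op_sym L) m n"
      and C4: "\<And>m n. Suc (m + n) = d \<Longrightarrow> F (m,n) - compT (m,n) = biv_coeff (\<Sum>i<length Ss. cs!i * rest Ss i) m n"
      using C unfolding sumd compT_def F_def assms(7) by auto
    define R' where "R' = (\<lambda>x. L x - F x)"
    have z: "R' (i,j) = 0" if ij: "d \<le> i + j + 1" for i j
    proof -
      consider "Suc d \<le> i + j" | "i + j = d" | "Suc (i + j) = d" using ij by linarith
      then show ?thesis
      proof cases
        case 1
        then have "L (i,j) = 0" "compT (i,j) = 0" "F (i,j) - compT (i,j) = 0"
          using lowL C1 C2 by (auto simp: low_def)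
        then show ?thesis by (simp add: R'_def)
      next
        case 2
        then have "F (i,j) - compT (i,j) = 0" using C2 by (simp add: low_def)
        moreover have "compT (i,j) = L (i,j)" using C3[OF 2] symc 2 by simp
        ultimately show ?thesis by (simp add: R'_def)
      next
        case 3
        then have "d \<noteq> 0" by simp
        have "F (i,j) - compT (i,j) = biv_coeff (polyOf (\<lambda>x. L x - compT x) (d - 1)) i j"
          using C4[OF 3] cs3[OF \<open>d \<noteq> 0\<close>] by simp
        also have "\<dots> = L (i,j) - compT (i,j)"
        proof -
          have "i + j = d - 1" using 3 by simp
          then show ?thesis by (simp add: biv_coeff_polyOf)
        qed
        finally show ?thesis by (simp add: R'_def)
      qed
    qed
    have vR: "op_valid R'"
    proof -
      have "low R' d" unfolding low_def using z by simp
      then show ?thesis using low_finite by (simp add: op_valid_def)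
    qed
    have fac: "has_factorization d1 d2 (L - R') Ss"
      unfolding has_factorization_def
    proof (intro exI[of _ "map2 mkF Ss cs"] conjI allI impI ballI)
      show "length (map2 mkF Ss cs) = length Ss" using cs1 by simp
      fix i assume i: "i < length Ss"
      then have "map2 mkF Ss cs ! i = mkF (Ss ! i) (cs ! i)" using cs1 by simp
      then show "op_sym (map2 mkF Ss cs ! i) = Ss ! i"
        using op_sym_mkF(1)[OF hS S0] cs2 i by (simp add: k_def)
    next
      fix G assume "G \<in> set (map2 mkF Ss cs)"
      then obtain i where i: "i < length Ss" "G = mkF (Ss ! i) (cs ! i)"
        using cs1 by (auto simp: in_set_conv_nth)
      then show "op_valid G" using op_sym_mkF(2)[OF hS S0] cs2 by (simp add: k_def)
    next
      show "op_comp_list d1 d2 (map2 mkF Ss cs) = L - R'"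
        by (rule ext) (simp add: R'_def F_def)
    qed
    have "op_ord R \<le> op_ord R'" using co vR fac unfolding common_obstacle_def by blast
    also have "\<dots> \<le> ereal (real d - 2)" by (rule ord_bound[OF vR z])
    finally show "op_ord R \<le> ereal (real d - 2)" .
  qed
qed

end
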